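(* Let $L=\mathbb Z^2$ with $B(x,y)=x\begin{pmatrix}2&1\\1&8\end{pmatrix}y^T$ (the lattice of the form $x^2+xy+4y^2$), $Q(x)=\frac12B(x,x)$, and for $\alpha,\beta\in\mathbb Q^2$ put $\theta_{\alpha,\beta}(\tau,z)=\sum_{v\in\mathbb Z^2}e(B(\beta,v))\,e(\tau Q(\alpha+v)+B(\alpha+v,z))$ on $\mathbb H\times\mathbb C^2$. Then the nine functions $\theta_{\alpha,\beta}^3$ with $\alpha\in\{(0,0),(\frac13,\frac13),(\frac23,\frac23)\}$ and $\beta\in\{(0,0),(\frac13,0),(\frac23,0)\}$ are $\mathbb C$-linearly independent.
   Context: $e(x)=\exp(2\pi ix)$, $\mathbb H$ the upper half plane; $B$ is extended bilinearly to $\mathbb C^2$. *)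

theory Defs
  imports "HOL-Analysis.Analysis"
begin

definition e :: "complex \<Rightarrow> complex" where
  "e x = exp (2 * of_real pi * \<i> * x)"

definition Bf :: "complex \<times> complex \<Rightarrow> complex \<times> complex \<Rightarrow> complex" where
  "Bf x y = 2 * fst x * fst y + fst x * snd y + snd x * fst y + 8 * snd x * snd y"

definition Qf :: "complex \<times> complex \<Rightarrow> complex" where
  "Qf x = Bf x x / 2"

definition vec_of_int :: "int \<times> int \<Rightarrow> complex \<times> complex" where
  "vec_of_int v = (of_int (fst v), of_int (snd v))"

definition vec_of_rat :: "rat \<times> rat \<Rightarrow> complex \<times> complex" where
  "vec_of_rat v = (of_rat (fst v), of_rat (snd v))"

definition theta :: "rat \<times> rat \<Rightarrow> rat \<times> rat \<Rightarrow> complex \<Rightarrow> complex \<times> complex \<Rightarrow> complex" where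
  "theta \<alpha> \<beta> \<tau> z = (\<Sum>\<^sub>\<infinity>v\<in>(UNIV :: (int \<times> int) set).
      e (Bf (vec_of_rat \<beta>) (vec_of_int v)) *
      e (\<tau> * Qf (vec_of_rat \<alpha> + vec_of_int v) + Bf (vec_of_rat \<alpha> + vec_of_int v) z))"

end

theory Submission
  imports Defs "HOL-Real_Asymp.Real_Asymp"
begin

lemma geo_int_summable:
  fixes r :: real assumes r: "0 \<le> r" "r < 1"
  shows "(\<lambda>n::int. r ^ nat \<bar>n\<bar>) summable_on UNIV"
proof -
  have g: "(\<lambda>n::nat. r ^ n) summable_on UNIV"
    by (rule summable_nonneg_imp_summable_on_strong) (use r in \<open>auto intro: summable_geometric\<close>)
  have g2: "(\<lambda>n::nat. r ^ Suc n) summable_on UNIV"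
    using summable_on_cmult_left[OF g, of r] by (simp add: mult.commute)
  have s1: "(\<lambda>n::int. r ^ nat \<bar>n\<bar>) summable_on (int ` UNIV)"
    by (subst summable_on_reindex) (auto simp: o_def g)
  have s2: "(\<lambda>n::int. r ^ nat \<bar>n\<bar>) summable_on ((\<lambda>n. - int (Suc n)) ` UNIV)"
  proof (subst summable_on_reindex)
    have "(\<lambda>n::nat. r ^ nat \<bar>- int (Suc n)\<bar>) = (\<lambda>n. r ^ Suc n)"
      by (rule ext) (simp only: abs_minus_cancel abs_of_nat nat_int)
    then show "((\<lambda>n::int. r ^ nat \<bar>n\<bar>) \<circ> (\<lambda>n. - int (Suc n))) summable_on UNIV"
      using g2 by (simp only: o_def)
  qed (auto simp: inj_on_def)
  have U: "UNIV = int ` UNIV \<union> (\<lambda>n. - int (Suc n)) ` UNIV"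
  proof -
    { fix x :: int
      have "x \<in> int ` UNIV \<union> (\<lambda>n. - int (Suc n)) ` UNIV"
      proof (cases "x \<ge> 0")
        case True then show ?thesis by (metis UnI1 nonneg_int_cases rangeI)
      next
        case False
        then have "x = - int (Suc (nat (- x - 1)))" by simp
        then show ?thesis by blast
      qed }
    then show ?thesis by blast
  qed
  show ?thesis
    by (subst U, rule summable_on_Un_disjoint[OF s1 s2]) auto
qed

lemma geo_int2_summable:
  fixes r :: real assumes r: "0 \<le> r" "r < 1"
  shows "(\<lambda>v::int\<times>int. r ^ nat \<bar>fst v\<bar> * r ^ nat \<bar>snd v\<bar>) summable_on UNIV"
proof -
  define G where "G = (\<Sum>\<^sub>\<infinity>n::int. r ^ nat \<bar>n\<bar>)"
  have h: "((\<lambda>y. r ^ nat \<bar>fst (x,y)\<bar> * r ^ nat \<bar>snd (x,y)\<bar>) has_sum (r ^ nat \<bar>x\<bar> * G)) UNIV" for x :: int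
    unfolding G_def using has_sum_cmult_right[OF has_sum_infsum[OF geo_int_summable[OF r]]] by simp
  have "(\<lambda>v::int\<times>int. r ^ nat \<bar>fst v\<bar> * r ^ nat \<bar>snd v\<bar>) summable_on Sigma UNIV (\<lambda>_. UNIV)"
    by (rule summable_on_SigmaI[OF h summable_on_cmult_left[OF geo_int_summable[OF r]]]) (use r in auto)
  then show ?thesis by simp
qed

definition Qr :: "real \<Rightarrow> real \<Rightarrow> real" where
  "Qr y1 y2 = y1^2 + y1*y2 + 4*y2^2"

lemma Qr_lower:
  fixes n1 n2 :: int and x1 x2 :: real
  shows "Qr (of_int n1 + x1) (of_int n2 + x2) \<ge> (\<bar>of_int n1\<bar> + \<bar>of_int n2\<bar>)/4 - (x1^2 + x2^2)/2"
proof -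
  have a: "Qr y1 y2 \<ge> (y1^2 + y2^2)/2" for y1 y2
  proof -
    have "Qr y1 y2 - (y1^2 + y2^2)/2 = (y1+y2)^2/2 + 3*y2^2"
      by (simp add: Qr_def power2_eq_square field_simps)
    moreover have "(y1+y2)^2/2 + 3*y2^2 \<ge> 0" by simp
    ultimately show ?thesis by linarith
  qed
  have b: "(of_int n + x)^2 \<ge> \<bar>of_int n\<bar>/2 - x^2" for n :: int and x :: real
  proof -
    have "(of_int n + x)^2 + x^2 \<ge> (of_int n)^2/2"
      using sum_squares_ge_zero[of "of_int n + 2*x" 0] by (simp add: power2_eq_square algebra_simps)
    moreover have "(of_int n :: real)^2 \<ge> \<bar>of_int n\<bar>"
    proof -
      have "\<bar>n\<bar> \<le> \<bar>n\<bar> * \<bar>n\<bar>"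
      proof (cases "n = 0")
        case False
        then have "1 \<le> \<bar>n\<bar>" by linarith
        from mult_right_mono[OF this, of "\<bar>n\<bar>"] show ?thesis by simp
      qed simp
      then have "\<bar>n\<bar> \<le> n^2" by (simp add: power2_eq_square abs_mult_self_eq)
      then show ?thesis by (metis of_int_abs of_int_le_iff of_int_power)
    qed
    ultimately show ?thesis by linarith
  qed
  show ?thesis using a[of "of_int n1 + x1" "of_int n2 + x2"] b[of n1 x1] b[of n2 x2] by argo
qed

lemma gauss_summable:
  fixes c x1 x2 :: real assumes c: "c > 0"
  shows "(\<lambda>v::int\<times>int. exp (- c * Qr (of_int (fst v) + x1) (of_int (snd v) + x2))) summable_on UNIV"
proof (rule summable_on_comparison_test)
  define r where "r = exp (- c / 4)"
  have r: "0 \<le> r" "r < 1" using c by (auto simp: r_def)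
  define K where "K = exp (c * (x1^2 + x2^2)/2)"
  show "(\<lambda>v::int\<times>int. K * (r ^ nat \<bar>fst v\<bar> * r ^ nat \<bar>snd v\<bar>)) summable_on UNIV"
    by (rule summable_on_cmult_right[OF geo_int2_summable[OF r]])
  fix v :: "int \<times> int"
  have rp: "r ^ nat \<bar>n\<bar> = exp (- c / 4 * \<bar>of_int n\<bar>)" for n :: int
  proof -
    have "r ^ nat \<bar>n\<bar> = exp (real (nat \<bar>n\<bar>) * (- c / 4))" unfolding r_def by (rule exp_of_nat_mult[symmetric])
    also have "real (nat \<bar>n\<bar>) = \<bar>of_int n\<bar>" by simp
    finally show ?thesis by (simp add: mult.commute)
  qed
  define q where "q = Qr (of_int (fst v) + x1) (of_int (snd v) + x2)"
  define a1 where "a1 = \<bar>real_of_int (fst v)\<bar>"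
  define a2 where "a2 = \<bar>real_of_int (snd v)\<bar>"
  define s where "s = x1^2 + x2^2"
  have "c * ((a1 + a2)/4 - s/2) \<le> c * q"
    using mult_left_mono[OF Qr_lower[of "fst v" "snd v" x1 x2], of c] c unfolding q_def a1_def a2_def s_def by simp
  moreover have "c * ((a1 + a2)/4 - s/2) = c / 4 * a1 + c / 4 * a2 - c * s / 2" by (simp add: algebra_simps)
  ultimately have "- c * q \<le> c * s / 2 + (- c / 4 * a1 + - c / 4 * a2)" by linarith
  then have "- c * Qr (of_int (fst v) + x1) (of_int (snd v) + x2) \<le>
        c * (x1^2 + x2^2)/2 + (- c / 4 * \<bar>of_int (fst v)\<bar> + - c / 4 * \<bar>of_int (snd v)\<bar>)"
    unfolding q_def a1_def a2_def s_def by simp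
  then show "exp (- c * Qr (of_int (fst v) + x1) (of_int (snd v) + x2)) \<le> K * (r ^ nat \<bar>fst v\<bar> * r ^ nat \<bar>snd v\<bar>)"
    unfolding K_def rp by (simp add: exp_add[symmetric])
qed simp

definition Br :: "real \<Rightarrow> real \<Rightarrow> real \<Rightarrow> real \<Rightarrow> real" where
  "Br x1 x2 y1 y2 = 2*x1*y1 + x1*y2 + x2*y1 + 8*x2*y2"

definition zz :: "real \<Rightarrow> real \<Rightarrow> real \<Rightarrow> real \<Rightarrow> real \<Rightarrow> complex \<times> complex" where
  "zz t p1 p2 w1 w2 = (of_real w1 - \<i> * of_real t * of_real p1, of_real w2 - \<i> * of_real t * of_real p2)"

lemma e_add: "e (x + y) = e x * e y"
  by (simp add: e_def distrib_left exp_add)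

lemma norm_e_real: "norm (e (of_real x)) = 1"
  unfolding e_def by (simp add: norm_exp_eq_Re)

lemma of_rat_complex: "(of_rat q :: complex) = of_real (of_rat q)"
  by (cases q) (simp add: of_rat_rat)

lemma term_eq:
  fixes \<alpha> \<beta> :: "rat \<times> rat" and v :: "int \<times> int"
  defines "A1 \<equiv> real_of_rat (fst \<alpha>) + of_int (fst v)"
      and "A2 \<equiv> real_of_rat (snd \<alpha>) + of_int (snd v)"
  shows "e (Bf (vec_of_rat \<beta>) (vec_of_int v)) *
      e ((\<i> * of_real t) * Qf (vec_of_rat \<alpha> + vec_of_int v) + Bf (vec_of_rat \<alpha> + vec_of_int v) (zz t p1 p2 w1 w2))
    = e (of_real (Br (real_of_rat (fst \<beta>)) (real_of_rat (snd \<beta>)) (of_int (fst v)) (of_int (snd v)) + Br A1 A2 w1 w2))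
      * of_real (exp (-2*pi*t*(Qr (A1 - p1) (A2 - p2) - Qr p1 p2)))"
proof -
  have "e (Bf (vec_of_rat \<beta>) (vec_of_int v)) *
      e ((\<i> * of_real t) * Qf (vec_of_rat \<alpha> + vec_of_int v) + Bf (vec_of_rat \<alpha> + vec_of_int v) (zz t p1 p2 w1 w2))
    = exp (2 * of_real pi * \<i> * (Bf (vec_of_rat \<beta>) (vec_of_int v) +
      ((\<i> * of_real t) * Qf (vec_of_rat \<alpha> + vec_of_int v) + Bf (vec_of_rat \<alpha> + vec_of_int v) (zz t p1 p2 w1 w2))))"
    unfolding e_def by (simp add: exp_add[symmetric] distrib_left)
  also have "\<dots> = exp (2 * of_real pi * \<i> * of_real (Br (real_of_rat (fst \<beta>)) (real_of_rat (snd \<beta>)) (of_int (fst v)) (of_int (snd v)) + Br A1 A2 w1 w2)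
      + of_real (-2*pi*t*(Qr (A1 - p1) (A2 - p2) - Qr p1 p2)))"
  proof -
    have "2 * of_real pi * \<i> * (Bf (vec_of_rat \<beta>) (vec_of_int v) +
      ((\<i> * of_real t) * Qf (vec_of_rat \<alpha> + vec_of_int v) + Bf (vec_of_rat \<alpha> + vec_of_int v) (zz t p1 p2 w1 w2)))
      = 2 * of_real pi * \<i> * of_real (Br (real_of_rat (fst \<beta>)) (real_of_rat (snd \<beta>)) (of_int (fst v)) (of_int (snd v)) + Br A1 A2 w1 w2)
      + of_real (-2*pi*t*(Qr (A1 - p1) (A2 - p2) - Qr p1 p2))"
      by (simp add: complex_eq_iff Bf_def Qf_def Br_def Qr_def zz_def vec_of_rat_def vec_of_int_def
            A1_def A2_def of_rat_complex power2_eq_square field_simps)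
    then show ?thesis by simp
  qed
  also have "\<dots> = e (of_real (Br (real_of_rat (fst \<beta>)) (real_of_rat (snd \<beta>)) (of_int (fst v)) (of_int (snd v)) + Br A1 A2 w1 w2))
      * of_real (exp (-2*pi*t*(Qr (A1 - p1) (A2 - p2) - Qr p1 p2)))"
    unfolding e_def by (simp only: exp_add exp_of_real)
  finally show ?thesis .
qed

lemma abstract_limit:
  fixes g :: "int\<times>int \<Rightarrow> real" and c :: "int\<times>int \<Rightarrow> complex"
  assumes M: "finite M" and c1: "\<And>v. norm (c v) = 1"
    and summ: "(\<lambda>v. exp (-2*pi*(g v - m))) summable_on UNIV"
    and gM: "\<And>v. v \<in> M \<Longrightarrow> g v = m" and gout: "\<And>v. v \<notin> M \<Longrightarrow> g v \<ge> m + \<delta>"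
    and \<delta>: "\<delta> > 0"
  shows "((\<lambda>t. \<Sum>\<^sub>\<infinity>v. c v * of_real (exp (-2*pi*t*(g v - m)))) \<longlongrightarrow> (\<Sum>v\<in>M. c v)) at_top"
proof -
  define F where "F t v = c v * of_real (exp (-2*pi*t*(g v - m)))" for t v
  define G where "G v = exp (-2*pi*(g v - m))" for v
  define C where "C = (\<Sum>\<^sub>\<infinity>v\<in>-M. G v)"
  have nn: "g v - m \<ge> 0" for v
  proof (cases "v \<in> M")
    case True then show ?thesis using gM[OF True] by simp
  next
    case False then show ?thesis using gout[OF False] \<delta> by simp
  qed
  have normF: "norm (F t v) = exp (-2*pi*t*(g v - m))" for t v
    unfolding F_def norm_mult c1 by simp
  have Gs: "G summable_on UNIV" using summ unfolding G_def .
  have Gs': "G summable_on (-M)" using summable_on_subset_banach[OF Gs] by simp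
  have bnd: "norm (F t v) \<le> G v" if "t \<ge> 1" for t v
    unfolding normF G_def using nn[of v] that
    by (simp add: mult_right_mono mult_left_mono)
  have bnd2: "norm (F t v) \<le> exp (-2*pi*(t-1)*\<delta>) * G v" if "t \<ge> 1" "v \<notin> M" for t v
  proof -
    have "exp (-2*pi*t*(g v - m)) = exp (-2*pi*(t-1)*(g v - m)) * G v"
      unfolding G_def by (simp add: exp_add[symmetric] algebra_simps)
    moreover have "exp (-2*pi*(t-1)*(g v - m)) \<le> exp (-2*pi*(t-1)*\<delta>)"
      using gout[OF that(2)] that(1) by (simp add: mult_left_mono)
    ultimately show ?thesis unfolding normF G_def by (simp add: mult_right_mono)
  qed
  have Fabs: "(\<lambda>v. norm (F t v)) summable_on A" if "t \<ge> 1" for t A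
  proof -
    have "(\<lambda>v. norm (F t v)) summable_on UNIV"
      by (rule summable_on_comparison_test[OF Gs]) (use bnd[OF that] in auto)
    then show ?thesis using summable_on_subset_banach by blast
  qed
  have Fs: "(F t) summable_on A" if "t \<ge> 1" for t A
    using abs_summable_summable[OF Fabs[OF that]] .
  have split: "(\<Sum>\<^sub>\<infinity>v. F t v) = (\<Sum>v\<in>M. c v) + (\<Sum>\<^sub>\<infinity>v\<in>-M. F t v)" if "t \<ge> 1" for t
  proof -
    have "(\<Sum>\<^sub>\<infinity>v. F t v) = (\<Sum>\<^sub>\<infinity>v\<in>M \<union> -M. F t v)" by simp
    also have "\<dots> = (\<Sum>\<^sub>\<infinity>v\<in>M. F t v) + (\<Sum>\<^sub>\<infinity>v\<in>-M. F t v)"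
      by (rule infsum_Un_disjoint[OF Fs[OF that] Fs[OF that]]) auto
    also have "(\<Sum>\<^sub>\<infinity>v\<in>M. F t v) = (\<Sum>v\<in>M. c v)"
      using M by (simp add: F_def gM)
    finally show ?thesis .
  qed
  have Rb: "norm (\<Sum>\<^sub>\<infinity>v\<in>-M. F t v) \<le> exp (-2*pi*(t-1)*\<delta>) * C" if "t \<ge> 1" for t
  proof -
    have "norm (\<Sum>\<^sub>\<infinity>v\<in>-M. F t v) \<le> (\<Sum>\<^sub>\<infinity>v\<in>-M. norm (F t v))"
      by (rule norm_infsum_bound[OF Fabs[OF that]])
    also have "\<dots> \<le> (\<Sum>\<^sub>\<infinity>v\<in>-M. exp (-2*pi*(t-1)*\<delta>) * G v)"
      by (rule infsum_mono[OF Fabs[OF that] summable_on_cmult_right[OF Gs']]) (use bnd2[OF that] in auto)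
    also have "\<dots> = exp (-2*pi*(t-1)*\<delta>) * C"
      unfolding C_def by (rule infsum_cmult_right')
    finally show ?thesis .
  qed
  have lim0: "((\<lambda>t. exp (-2*pi*(t-1)*\<delta>) * C) \<longlongrightarrow> 0) at_top"
    using \<delta> by real_asymp
  have R0: "((\<lambda>t. \<Sum>\<^sub>\<infinity>v\<in>-M. F t v) \<longlongrightarrow> 0) at_top"
    by (rule Lim_null_comparison[OF _ lim0]) (use Rb in \<open>auto simp: eventually_at_top_linorder\<close>)
  have "((\<lambda>t. (\<Sum>v\<in>M. c v) + (\<Sum>\<^sub>\<infinity>v\<in>-M. F t v)) \<longlongrightarrow> (\<Sum>v\<in>M. c v) + 0) at_top"
    by (intro tendsto_add tendsto_const R0)
  then have L1: "((\<lambda>t. (\<Sum>v\<in>M. c v) + (\<Sum>\<^sub>\<infinity>v\<in>-M. F t v)) \<longlongrightarrow> (\<Sum>v\<in>M. c v)) at_top" by simp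
  have ev: "eventually (\<lambda>t. (\<Sum>v\<in>M. c v) + (\<Sum>\<^sub>\<infinity>v\<in>-M. F t v) = (\<Sum>\<^sub>\<infinity>v. F t v)) at_top"
    using split unfolding eventually_at_top_linorder by (metis)
  have "((\<lambda>t. \<Sum>\<^sub>\<infinity>v. F t v) \<longlongrightarrow> (\<Sum>v\<in>M. c v)) at_top"
    by (rule Lim_transform_eventually[OF L1 ev])
  then show ?thesis unfolding F_def .
qed

lemma theta_limit:
  fixes \<alpha> \<beta> :: "rat \<times> rat" and p1 p2 w1 w2 m \<delta> :: real and M :: "(int \<times> int) set"
  defines "g \<equiv> \<lambda>v::int\<times>int. Qr (of_int (fst v) + (real_of_rat (fst \<alpha>) - p1)) (of_int (snd v) + (real_of_rat (snd \<alpha>) - p2))"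
  assumes M: "finite M" and gM: "\<And>v. v \<in> M \<Longrightarrow> g v = m" and gout: "\<And>v. v \<notin> M \<Longrightarrow> g v \<ge> m + \<delta>"
    and \<delta>: "\<delta> > 0"
  shows "((\<lambda>t. of_real (exp (-2*pi*t*(Qr p1 p2 - m))) * theta \<alpha> \<beta> (\<i> * of_real t) (zz t p1 p2 w1 w2))
     \<longlongrightarrow> (\<Sum>v\<in>M. e (of_real (Br (real_of_rat (fst \<beta>)) (real_of_rat (snd \<beta>)) (of_int (fst v)) (of_int (snd v))
             + Br (real_of_rat (fst \<alpha>) + of_int (fst v)) (real_of_rat (snd \<alpha>) + of_int (snd v)) w1 w2)))) at_top"
proof -
  define c where "c v = e (of_real (Br (real_of_rat (fst \<beta>)) (real_of_rat (snd \<beta>)) (of_int (fst v)) (of_int (snd v))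
             + Br (real_of_rat (fst \<alpha>) + of_int (fst v)) (real_of_rat (snd \<alpha>) + of_int (snd v)) w1 w2))" for v :: "int \<times> int"
  have eq: "of_real (exp (-2*pi*t*(Qr p1 p2 - m))) * theta \<alpha> \<beta> (\<i> * of_real t) (zz t p1 p2 w1 w2)
      = (\<Sum>\<^sub>\<infinity>v. c v * of_real (exp (-2*pi*t*(g v - m))))" for t
  proof -
    have "of_real (exp (-2*pi*t*(Qr p1 p2 - m))) * theta \<alpha> \<beta> (\<i> * of_real t) (zz t p1 p2 w1 w2)
       = (\<Sum>\<^sub>\<infinity>v. of_real (exp (-2*pi*t*(Qr p1 p2 - m))) * (e (Bf (vec_of_rat \<beta>) (vec_of_int v)) *
      e ((\<i> * of_real t) * Qf (vec_of_rat \<alpha> + vec_of_int v) + Bf (vec_of_rat \<alpha> + vec_of_int v) (zz t p1 p2 w1 w2))))"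
      unfolding theta_def by (rule infsum_cmult_right'[symmetric])
    also have "\<dots> = (\<Sum>\<^sub>\<infinity>v. c v * of_real (exp (-2*pi*t*(g v - m))))"
    proof (rule infsum_cong)
      fix v :: "int \<times> int"
      have gg: "g v = Qr (real_of_rat (fst \<alpha>) + of_int (fst v) - p1) (real_of_rat (snd \<alpha>) + of_int (snd v) - p2)"
        unfolding g_def by (simp add: algebra_simps)
      have KE: "exp (-2*pi*t*(Qr p1 p2 - m)) * exp (-2*pi*t*(g v - Qr p1 p2)) = exp (-2*pi*t*(g v - m))"
        by (simp add: exp_add[symmetric] algebra_simps)
      have "of_real (exp (-2*pi*t*(Qr p1 p2 - m))) * (e (Bf (vec_of_rat \<beta>) (vec_of_int v)) *
      e ((\<i> * of_real t) * Qf (vec_of_rat \<alpha> + vec_of_int v) + Bf (vec_of_rat \<alpha> + vec_of_int v) (zz t p1 p2 w1 w2)))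
        = of_real (exp (-2*pi*t*(Qr p1 p2 - m))) * (c v * of_real (exp (-2*pi*t*(g v - Qr p1 p2))))"
        by (simp only: term_eq c_def gg)
      also have "\<dots> = c v * of_real (exp (-2*pi*t*(Qr p1 p2 - m)) * exp (-2*pi*t*(g v - Qr p1 p2)))"
        by (simp only: of_real_mult mult.left_commute)
      finally show "of_real (exp (-2*pi*t*(Qr p1 p2 - m))) * (e (Bf (vec_of_rat \<beta>) (vec_of_int v)) *
      e ((\<i> * of_real t) * Qf (vec_of_rat \<alpha> + vec_of_int v) + Bf (vec_of_rat \<alpha> + vec_of_int v) (zz t p1 p2 w1 w2)))
        = c v * of_real (exp (-2*pi*t*(g v - m)))"
        by (simp only: KE)
    qed
    finally show ?thesis .
  qed
  have lim: "((\<lambda>t. \<Sum>\<^sub>\<infinity>v. c v * of_real (exp (-2*pi*t*(g v - m)))) \<longlongrightarrow> (\<Sum>v\<in>M. c v)) at_top"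
  proof (rule abstract_limit[OF M _ _ gM gout \<delta>])
    show "norm (c v) = 1" for v unfolding c_def by (rule norm_e_real)
    have "(\<lambda>v. exp (2*pi*m) * exp (- (2*pi) * g v)) summable_on UNIV"
      unfolding g_def by (rule summable_on_cmult_right[OF gauss_summable]) simp
    moreover have "(\<lambda>v. exp (2*pi*m) * exp (- (2*pi) * g v)) = (\<lambda>v. exp (-2*pi*(g v - m)))"
      by (rule ext) (simp add: exp_add[symmetric] algebra_simps)
    ultimately show "(\<lambda>v. exp (-2*pi*(g v - m))) summable_on UNIV" by simp
  qed
  show ?thesis unfolding eq using lim unfolding c_def .
qed

lemma linalg:
 fixes a b d w :: complex
 assumes hw: "w^2 + w + 1 = 0"
 and h1: "a*(1+1)^3 + b*(1+w*1)^3 + d*(1+w^2*1)^3 = 0"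
 and h2: "a*(1+(-1))^3 + b*(1+w*(-1))^3 + d*(1+w^2*(-1))^3 = 0"
 and h3: "a*(1+\<i>)^3 + b*(1+w*\<i>)^3 + d*(1+w^2*\<i>)^3 = 0"
 shows "a = 0 \<and> b = 0 \<and> d = 0"
proof -
  define S where "S = a + b + d"
  define A where "A = a + b*w + d*w^2"
  define A2 where "A2 = a + b*w^2 + d*w"
  have w3: "w^3 = 1" using hw by algebra
  have e1: "2*S + 3*A + 3*A2 = 0" using h1 w3 unfolding S_def A_def A2_def by algebra
  have h2': "b*(1-w)^3 + d*(1-w^2)^3 = 0" using h2 by simp
  have e2': "3*A2 = 3*A" using h2' w3 unfolding S_def A_def A2_def by algebra
  then have e2: "A2 = A" by simp
  have ii: "\<i>^2 = (-1::complex)" by simp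
  have e3: "(1 - \<i>)*S + 3*\<i>*A - 3*A2 = 0" using h3 w3 ii unfolding S_def A_def A2_def by algebra
  have S: "S = -3*A" using e1 e2 by algebra
  have "A * (-6 + 6*\<i>) = 0" using e3 S e2 by algebra
  moreover have "(-6 + 6*\<i>) \<noteq> (0::complex)" by (simp add: complex_eq_iff)
  ultimately have A0: "A = 0" by simp
  then have S0: "S = 0" and A20: "A2 = 0" using S e2 by auto
  have "3*a = S + A + A2" using hw unfolding S_def A_def A2_def by algebra
  moreover have "3*b = S + w^2*A + w*A2" using hw w3 unfolding S_def A_def A2_def by algebra
  moreover have "3*d = S + w*A + w^2*A2" using hw w3 unfolding S_def A_def A2_def by algebra
  ultimately show ?thesis using A0 S0 A20 by simp
qed

lemma Qr_decomp: "Qr y1 y2 = (y1 + y2/2)^2 + 15/4 * y2^2"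
  by (simp add: Qr_def power2_eq_square field_simps)

lemma qb_off:
  fixes n1 n2 d :: int assumes "d \<noteq> 0" "\<bar>d\<bar> \<le> 2"
  shows "Qr (of_int n1 + (of_int d/3 - 1/2)) (of_int n2 + of_int d/3) \<ge> 1/4 + 1/6"
proof -
  have "3*n2 + d \<noteq> 0" using assms by presburger
  then have "\<bar>3*n2 + d\<bar> \<ge> 1" by linarith
  then have "\<bar>of_int (3*n2 + d)\<bar> \<ge> (1::real)" by (metis of_int_1_le_iff of_int_abs)
  then have X: "(of_int (3*n2 + d))^2 \<ge> (1::real)"
    by (metis one_le_power power2_abs)
  have "of_int n2 + of_int d/3 = (of_int (3*n2 + d) :: real)/3" by simp
  then have eq2: "(of_int n2 + of_int d/3)^2 = (of_int (3*n2 + d) :: real)^2 / 9"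
    by (simp add: power2_eq_square field_simps)
  have "(of_int n2 + of_int d/3)^2 \<ge> (1::real)/9"
    unfolding eq2 using X by (simp del: of_int_add of_int_mult)
  then have "15/4 * (of_int n2 + of_int d/3)^2 \<ge> (15/4::real)*(1/9)" by simp
  moreover have "0 \<le> ((of_int n1 + (of_int d/3 - 1/2)) + (of_int n2 + of_int d/3)/2 :: real)^2" by simp
  ultimately show ?thesis unfolding Qr_decomp by linarith
qed

lemma qb_same:
  fixes n1 n2 :: int assumes "(n1, n2) \<notin> {(0,0),(1,0)}"
  shows "Qr (of_int n1 + (-1/2)) (of_int n2) \<ge> 1/4 + 1/6"
proof (cases "n2 = 0")
  case True
  then have "n1 \<ge> 2 \<or> n1 \<le> -1" using assms by auto
  then have "\<bar>of_int n1 - 1/2\<bar> \<ge> (3/2::real)" by auto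
  then have "(3/2::real)^2 \<le> \<bar>of_int n1 - 1/2\<bar>^2"
    by (rule power_mono) auto
  then have Y: "(of_int n1 - 1/2)^2 \<ge> (9/4::real)" by (simp add: power_divide)
  have "Qr (of_int n1 + (-1/2)) (of_int n2) = (of_int n1 - 1/2)^2" using True by (simp add: Qr_def)
  then show ?thesis using Y by linarith
next
  case False
  then have "\<bar>n2\<bar> \<ge> 1" by linarith
  then have "\<bar>of_int n2\<bar> \<ge> (1::real)" by (metis of_int_1_le_iff of_int_abs)
  then have "(of_int n2)^2 \<ge> (1::real)"
    by (metis one_le_power power2_abs)
  moreover have "0 \<le> ((of_int n1 + (-1/2)) + (of_int n2)/2 :: real)^2" by simp
  ultimately show ?thesis unfolding Qr_decomp by linarith
qed

lemma rat_third: "real_of_rat (of_nat j / 3) = real j / 3"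
  by (simp add: of_rat_divide)

lemma lim_same:
  "((\<lambda>t. of_real (exp (-2*pi*t*(Qr (real j/3 + 1/2) (real j/3) - 1/4))) *
      theta (of_nat j/3, of_nat j/3) (of_nat k/3, 0) (\<i> * of_real t) (zz t (real j/3 + 1/2) (real j/3) sv 0))
    \<longlongrightarrow> e (of_real (real j * sv)) * (1 + e (of_real (2 * real k / 3)) * e (of_real (2* sv)))) at_top"
proof -
  have L: "((\<lambda>t. of_real (exp (-2*pi*t*(Qr (real j/3 + 1/2) (real j/3) - 1/4))) *
      theta (of_nat j/3, of_nat j/3) (of_nat k/3, 0) (\<i> * of_real t) (zz t (real j/3 + 1/2) (real j/3) sv 0))
    \<longlongrightarrow> (\<Sum>v\<in>{(0,0),(1,0)}. e (of_real (Br (real_of_rat (fst (of_nat k/3 :: rat, 0::rat))) (real_of_rat (snd (of_nat k/3 :: rat, 0::rat))) (of_int (fst v)) (of_int (snd v))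
             + Br (real_of_rat (fst (of_nat j/3 :: rat, of_nat j/3 :: rat)) + of_int (fst v)) (real_of_rat (snd (of_nat j/3 :: rat, of_nat j/3 :: rat)) + of_int (snd v)) sv 0)))) at_top"
  proof (rule theta_limit[where m = "1/4" and \<delta> = "1/6"])
    fix v :: "int \<times> int"
    obtain n1 n2 where v: "v = (n1, n2)" by fastforce
    have g: "Qr (of_int (fst v) + (real_of_rat (fst (of_nat j/3 :: rat, of_nat j/3 :: rat)) - (real j/3 + 1/2)))
       (of_int (snd v) + (real_of_rat (snd (of_nat j/3 :: rat, of_nat j/3 :: rat)) - real j/3))
       = Qr (of_int n1 + (-1/2)) (of_int n2)"
      unfolding v by (simp add: rat_third)
    show "v \<in> {(0,0),(1,0)} \<Longrightarrow> Qr (of_int (fst v) + (real_of_rat (fst (of_nat j/3 :: rat, of_nat j/3 :: rat)) - (real j/3 + 1/2)))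
       (of_int (snd v) + (real_of_rat (snd (of_nat j/3 :: rat, of_nat j/3 :: rat)) - real j/3)) = 1/4"
      unfolding g by (auto simp: v Qr_def power2_eq_square)
    show "v \<notin> {(0,0),(1,0)} \<Longrightarrow> Qr (of_int (fst v) + (real_of_rat (fst (of_nat j/3 :: rat, of_nat j/3 :: rat)) - (real j/3 + 1/2)))
       (of_int (snd v) + (real_of_rat (snd (of_nat j/3 :: rat, of_nat j/3 :: rat)) - real j/3)) \<ge> 1/4 + 1/6"
      unfolding g using qb_same[of n1 n2] v by blast
  qed auto
  have "(\<Sum>v\<in>{(0::int,0::int),(1,0)}. e (of_real (Br (real_of_rat (fst (of_nat k/3 :: rat, 0::rat))) (real_of_rat (snd (of_nat k/3 :: rat, 0::rat))) (of_int (fst v)) (of_int (snd v))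
             + Br (real_of_rat (fst (of_nat j/3 :: rat, of_nat j/3 :: rat)) + of_int (fst v)) (real_of_rat (snd (of_nat j/3 :: rat, of_nat j/3 :: rat)) + of_int (snd v)) sv 0)))
     = e (of_real (real j * sv)) + e (of_real (2 * real k / 3) + of_real (real j * sv) + of_real (2* sv))"
    by (simp add: rat_third Br_def algebra_simps)
  also have "\<dots> = e (of_real (real j * sv)) * (1 + e (of_real (2 * real k / 3)) * e (of_real (2* sv)))"
    by (simp add: e_add algebra_simps)
  finally show ?thesis using L by simp
qed

lemma lim_diff:
  assumes "j \<le> 2" "j' \<le> 2" "j \<noteq> j'"
  shows "((\<lambda>t. of_real (exp (-2*pi*t*(Qr (real j/3 + 1/2) (real j/3) - 1/4))) *
      theta (of_nat j'/3, of_nat j'/3) (of_nat k/3, 0) (\<i> * of_real t) (zz t (real j/3 + 1/2) (real j/3) sv 0))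
    \<longlongrightarrow> 0) at_top"
proof -
  have L: "((\<lambda>t. of_real (exp (-2*pi*t*(Qr (real j/3 + 1/2) (real j/3) - 1/4))) *
      theta (of_nat j'/3, of_nat j'/3) (of_nat k/3, 0) (\<i> * of_real t) (zz t (real j/3 + 1/2) (real j/3) sv 0))
    \<longlongrightarrow> (\<Sum>v\<in>{}. e (of_real (Br (real_of_rat (fst (of_nat k/3 :: rat, 0::rat))) (real_of_rat (snd (of_nat k/3 :: rat, 0::rat))) (of_int (fst v)) (of_int (snd v))
             + Br (real_of_rat (fst (of_nat j'/3 :: rat, of_nat j'/3 :: rat)) + of_int (fst v)) (real_of_rat (snd (of_nat j'/3 :: rat, of_nat j'/3 :: rat)) + of_int (snd v)) sv 0)))) at_top"
  proof (rule theta_limit[where m = "1/4" and \<delta> = "1/6"])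
    fix v :: "int \<times> int"
    define d where "d = int j' - int j"
    have d: "d \<noteq> 0" "\<bar>d\<bar> \<le> 2" using assms unfolding d_def by auto
    have g: "Qr (of_int (fst v) + (real_of_rat (fst (of_nat j'/3 :: rat, of_nat j'/3 :: rat)) - (real j/3 + 1/2)))
       (of_int (snd v) + (real_of_rat (snd (of_nat j'/3 :: rat, of_nat j'/3 :: rat)) - real j/3))
       = Qr (of_int (fst v) + (of_int d/3 - 1/2)) (of_int (snd v) + of_int d/3)"
      unfolding d_def by (simp add: rat_third field_simps)
    show "v \<notin> {} \<Longrightarrow> Qr (of_int (fst v) + (real_of_rat (fst (of_nat j'/3 :: rat, of_nat j'/3 :: rat)) - (real j/3 + 1/2)))
       (of_int (snd v) + (real_of_rat (snd (of_nat j'/3 :: rat, of_nat j'/3 :: rat)) - real j/3)) \<ge> 1/4 + 1/6"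
      unfolding g by (rule qb_off[OF d])
  qed auto
  then show ?thesis by simp
qed

lemma e_cis: "e (of_real x) = cis (2*pi*x)"
  unfolding e_def cis_conv_exp by (simp add: algebra_simps)

lemma e_omega_pow: "e (of_real (2 * real k / 3)) = e (of_real (2/3)) ^ k"
proof -
  have "e (of_real (2 * real k / 3)) = exp (of_nat k * (2 * of_real pi * \<i> * of_real (2/3)))"
    unfolding e_def by (simp add: algebra_simps)
  also have "\<dots> = e (of_real (2/3)) ^ k" unfolding e_def by (rule exp_of_nat_mult)
  finally show ?thesis .
qed

lemma omega_rel: "e (of_real (2/3)) ^ 2 + e (of_real (2/3)) + 1 = 0"
proof -
  define w where "w = e (of_real (2/3))"
  have "w ^ 3 = e (of_real (2 * real 3 / 3))" unfolding w_def by (rule e_omega_pow[symmetric])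
  also have "\<dots> = cis (2 * pi * 2)" using e_cis[of 2] by simp
  also have "\<dots> = 1" using cis_multiple_2pi[of 2] by simp
  finally have w3: "w^3 = 1" .
  have "Im w = sin (2*pi*(2/3))" unfolding w_def e_cis by simp
  also have "\<dots> < 0" by (rule sin_lt_zero) auto
  finally have "w \<noteq> 1" by auto
  moreover have "(w - 1) * (w^2 + w + 1) = 0" using w3 by algebra
  ultimately show ?thesis unfolding w_def by simp
qed

theorem proposition7p15:
  fixes c :: "nat \<Rightarrow> nat \<Rightarrow> complex"
  assumes "\<And>\<tau> z. Im \<tau> > 0 \<Longrightarrow>
     (\<Sum>j\<in>{0,1,2}. \<Sum>k\<in>{0,1,2}.
        c j k * (theta (of_nat j / 3, of_nat j / 3) (of_nat k / 3, 0) \<tau> z) ^ 3) = 0"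
  shows "\<forall>j\<in>{0,1,2}. \<forall>k\<in>{0,1,2}. c j k = 0"
proof (intro ballI)
  fix j k :: nat assume j: "j \<in> {0,1,2}" and k: "k \<in> {0,1,2}"
  define \<omega> where "\<omega> = e (of_real (2/3))"
  have key: "(\<Sum>k\<in>{0,1,2}. c j k * (1 + \<omega> ^ k * e (of_real (2 * sv)))^3) = 0" for sv
  proof -
    define P where "P t = complex_of_real (exp (-2*pi*t*(Qr (real j/3 + 1/2) (real j/3) - 1/4)))" for t
    define Z where "Z t = zz t (real j/3 + 1/2) (real j/3) sv 0" for t
    define E where "E = e (of_real (real j * sv))"
    define Lm where "Lm j' k = (if j' = j then E * (1 + e (of_real (2 * real k / 3)) * e (of_real (2 * sv))) else 0)" for j' k
    have lim: "((\<lambda>t. P t * theta (of_nat j'/3, of_nat j'/3) (of_nat k/3, 0) (\<i> * of_real t) (Z t)) \<longlongrightarrow> Lm j' k) at_top"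
      if "j' \<in> {0,1,2}" for j' k
    proof (cases "j' = j")
      case True
      then show ?thesis unfolding P_def Z_def Lm_def E_def using lim_same[of j k sv] by simp
    next
      case False
      then show ?thesis unfolding P_def Z_def Lm_def using lim_diff[of j j' k sv] j that by auto
    qed
    have T: "((\<lambda>t. \<Sum>j'\<in>{0,1,2}. \<Sum>k\<in>{0,1,2}. c j' k * (P t * theta (of_nat j'/3, of_nat j'/3) (of_nat k/3, 0) (\<i> * of_real t) (Z t))^3)
       \<longlongrightarrow> (\<Sum>j'\<in>{0,1,2}. \<Sum>k\<in>{0,1,2}. c j' k * (Lm j' k)^3)) at_top"
      by (intro tendsto_sum tendsto_mult_left tendsto_power lim)
    have ev: "eventually (\<lambda>t. (\<Sum>j'\<in>{0,1,2}. \<Sum>k\<in>{0,1,2}. c j' k * (P t * theta (of_nat j'/3, of_nat j'/3) (of_nat k/3, 0) (\<i> * of_real t) (Z t))^3) = 0) at_top"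
      using eventually_gt_at_top[of "0::real"]
    proof eventually_elim
      case (elim t)
      have "(\<Sum>j'\<in>{0,1,2}. \<Sum>k\<in>{0,1,2}. c j' k * (P t * theta (of_nat j'/3, of_nat j'/3) (of_nat k/3, 0) (\<i> * of_real t) (Z t))^3)
        = P t ^ 3 * (\<Sum>j'\<in>{0,1,2}. \<Sum>k\<in>{0,1,2}. c j' k * (theta (of_nat j'/3, of_nat j'/3) (of_nat k/3, 0) (\<i> * of_real t) (Z t))^3)"
        unfolding sum_distrib_left power_mult_distrib by (intro sum.cong refl) (simp only: mult_ac)
      also have "\<dots> = 0" using assms[of "\<i> * of_real t" "Z t"] elim by simp
      finally show ?case .
    qed
    have "((\<lambda>t::real. 0) \<longlongrightarrow> (\<Sum>j'\<in>{0,1,2}. \<Sum>k\<in>{0,1,2}. c j' k * (Lm j' k)^3)) at_top"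
      by (rule Lim_transform_eventually[OF T]) (use ev in simp)
    then have X0: "(\<Sum>j'\<in>{0,1,2}. \<Sum>k\<in>{0,1,2}. c j' k * (Lm j' k)^3) = 0"
      by (simp add: tendsto_const_iff)
    have "(\<Sum>j'\<in>{0,1,2}. \<Sum>k\<in>{0,1,2}. c j' k * (Lm j' k)^3)
        = (\<Sum>j'\<in>{0,1,2}. if j' = j then (\<Sum>k\<in>{0,1,2}. c j k * (Lm j k)^3) else 0)"
      by (rule sum.cong) (auto simp: Lm_def)
    also have "\<dots> = (\<Sum>k\<in>{0,1,2}. c j k * (Lm j k)^3)"
      using j by (simp only: sum.delta finite.emptyI finite.insertI) simp
    also have "\<dots> = E^3 * (\<Sum>k\<in>{0,1,2}. c j k * (1 + \<omega> ^ k * e (of_real (2 * sv)))^3)"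
      unfolding sum_distrib_left by (intro sum.cong refl) (simp only: Lm_def simp_thms if_True e_omega_pow flip: \<omega>_def, simp add: power_mult_distrib mult_ac)
    finally have "E^3 * (\<Sum>k\<in>{0,1,2}. c j k * (1 + \<omega> ^ k * e (of_real (2 * sv)))^3) = 0"
      using X0 by simp
    moreover have "E \<noteq> 0" unfolding E_def e_def by simp
    ultimately show ?thesis by simp
  qed
  have Er: "c j 0 * (1 + r)^3 + c j 1 * (1 + \<omega>*r)^3 + c j 2 * (1 + \<omega>^2*r)^3 = 0"
    if "e (of_real (2 * sv)) = r" for r sv
    using key[of sv] unfolding that by (simp add: numeral_2_eq_2 add.assoc)
  have r1: "e (of_real (2 * 0)) = 1" by (simp add: e_def)
  have r2: "e (of_real (2 * (1/4))) = -1" using e_cis[of "1/2"] by simp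
  have r3: "e (of_real (2 * (1/8))) = \<i>" using e_cis[of "1/4"] by simp
  have "c j 0 = 0 \<and> c j 1 = 0 \<and> c j 2 = 0"
    by (rule linalg[OF _ Er[OF r1] Er[OF r2] Er[OF r3]]) (use omega_rel in \<open>simp add: \<omega>_def\<close>)
  then show "c j k = 0" using k by auto
qed

end
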